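(* Let $\lambda\in[0,\frac{\pi}{2})$ and let $\mathcal{M}=(M_1,M_2,M_3)$ be a measurement scenario with $M_1=\{A_j\}_j$, $M_2=\{B_k\}_k$, $M_3=\{C_0,\dots,C_{n-1}\}$. For $z\in\{0,1\}$ define $r_{jkl}(z):=\pi^{-1}[(A_j+B_k)-\beta(\lambda,C_l+z\pi)]\bmod 2\in[0,2)$ and the system of $\mathbb{Z}_2$-linear equations $\Psi_l(z):=\{a_j\oplus b_k=r_{jkl}(z) : \text{all } j,k \text{ with } r_{jkl}(z)\in\{0,1\}\}$ in the unknowns $a_j,b_k\in\mathbb{Z}_2$. Then $(|B(\lambda)\rangle,\mathcal{M})$ is a paradox if and only if for every $\vec z=(z_0,\dots,z_{n-1})\in\mathbb{Z}_2^n$ the system $\Psi(\vec z):=\bigcup_l\Psi_l(z_l)$ is inconsistent.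
   Context: $\oplus$ is addition mod 2. For $\varphi\in\mathbb{R}$, $E_\varphi=\cos\varphi X+\sin\varphi Y$ is the equatorial measurement, with $+1$ eigenvector $|\varphi\rangle=\frac{1}{\sqrt2}(|0\rangle+e^{i\varphi}|1\rangle)$ and $-1$ eigenvector $|\varphi+\pi\rangle$; outcomes $+1,-1$ relabelled $0,1$; measurements identified with angles. A measurement scenario $\mathcal{M}=(M_1,M_2,M_3)$ consists of finite sets $M_i\subseteq[0,\pi)$ of angles for qubit $i$; contexts are triples in $M_1\times M_2\times M_3$. For a three-qubit state $|\psi\rangle$, the event $(A,B,C)\to(a,b,c)$ is impossible if $(\langle A+a\pi|\otimes\langle B+b\pi|\otimes\langle C+c\pi|)|\psi\rangle=0$. $(|\psi\rangle,\mathcal{M})$ is a paradox if for every assignment $g$ of outcomes in $\{0,1\}$ to all measurements of $M_1,M_2,M_3$ (as disjoint sets) some context $(A,B,C)$ has $(A,B,C)\to(g(A),g(B),g(C))$ impossible. For $\lambda\in[0,\frac{\pi}{2})$, $|v_\lambda\rangle=\cos\frac{\lambda}{2}|0\rangle+\sin\frac{\lambda}{2}|1\rangle$, $|w_\lambda\rangle=\sin\frac{\lambda}{2}|0\rangle+\cos\frac{\lambda}{2}|1\rangle$, and the interpolant state is $|B(\lambda)\rangle=\frac{1}{\sqrt2}(|00\rangle|v_\lambda\rangle+|11\rangle|w_\lambda\rangle)$. Define modulo $2\pi$: $\beta(\lambda,\varphi)=\varphi-2\arctan\left(\frac{\cos\frac{\lambda}{2}\sin\varphi}{\sin\frac{\lambda}{2}+\cos\frac{\lambda}{2}\cos\varphi}\right)$.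 *)

theory Defs
  imports Complex_Main
begin

text \<open>Outcomes 0,1 are represented by False, True.  Qubit basis states |0>,|1> by False, True.\<close>

definition outcome_val :: "bool \<Rightarrow> real" where
  "outcome_val a = (if a then 1 else 0)"

definition eq_ket :: "real \<Rightarrow> bool \<Rightarrow> complex" where
  "eq_ket \<phi> x = (if x then cis \<phi> else 1) / complex_of_real (sqrt 2)"

type_synonym state3 = "bool \<Rightarrow> bool \<Rightarrow> bool \<Rightarrow> complex"

definition impossible ::
  "state3 \<Rightarrow> real \<times> real \<times> real \<Rightarrow> bool \<times> bool \<times> bool \<Rightarrow> bool" where
  "impossible psi M out \<longleftrightarrow>
     (case M of (A, B, C) \<Rightarrow> case out of (a, b, c) \<Rightarrow>
       (\<Sum>x1\<in>UNIV. \<Sum>x2\<in>UNIV. \<Sum>x3\<in>UNIV.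
          cnj (eq_ket (A + outcome_val a * pi) x1) *
          cnj (eq_ket (B + outcome_val b * pi) x2) *
          cnj (eq_ket (C + outcome_val c * pi) x3) * psi x1 x2 x3) = 0)"

definition measurement_scenario :: "real set \<Rightarrow> real set \<Rightarrow> real set \<Rightarrow> bool" where
  "measurement_scenario M1 M2 M3 \<longleftrightarrow>
     finite M1 \<and> finite M2 \<and> finite M3 \<and>
     M1 \<subseteq> {0..<pi} \<and> M2 \<subseteq> {0..<pi} \<and> M3 \<subseteq> {0..<pi}"

text \<open>Paradox: every outcome assignment (one function per qubit, since the sets of
  measurements are treated as disjoint) makes some context impossible.\<close>
definition paradox :: "state3 \<Rightarrow> real set \<Rightarrow> real set \<Rightarrow> real set \<Rightarrow> bool" where
  "paradox psi M1 M2 M3 \<longleftrightarrow>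
     (\<forall>g1 g2 g3 :: real \<Rightarrow> bool. \<exists>A\<in>M1. \<exists>B\<in>M2. \<exists>C\<in>M3.
        impossible psi (A, B, C) (g1 A, g2 B, g3 C))"

definition v_lam :: "real \<Rightarrow> bool \<Rightarrow> complex" where
  "v_lam lam x = (if x then complex_of_real (sin (lam/2)) else complex_of_real (cos (lam/2)))"

definition w_lam :: "real \<Rightarrow> bool \<Rightarrow> complex" where
  "w_lam lam x = (if x then complex_of_real (cos (lam/2)) else complex_of_real (sin (lam/2)))"

definition B_state :: "real \<Rightarrow> state3" where
  "B_state lam x1 x2 x3 =
     ((if \<not> x1 \<and> \<not> x2 then v_lam lam x3 else 0) +
      (if x1 \<and> x2 then w_lam lam x3 else 0)) / complex_of_real (sqrt 2)"

text \<open>beta(lambda, phi) (mod 2 pi); when the denominator vanishes, the arctan is read as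
  its limiting value +-pi/2, giving phi - pi (mod 2 pi).\<close>
definition beta :: "real \<Rightarrow> real \<Rightarrow> real" where
  "beta lam \<phi> =
     (let d = sin (lam/2) + cos (lam/2) * cos \<phi> in
      if d = 0 then \<phi> - pi
      else \<phi> - 2 * arctan (cos (lam/2) * sin \<phi> / d))"

definition mod2r :: "real \<Rightarrow> real" where
  "mod2r x = x - 2 * of_int \<lfloor>x / 2\<rfloor>"

definition r_coef :: "real \<Rightarrow> real \<Rightarrow> real \<Rightarrow> real \<Rightarrow> bool \<Rightarrow> real" where
  "r_coef lam A B C z = mod2r (((A + B) - beta lam (C + outcome_val z * pi)) / pi)"

definition xor_eq :: "bool \<Rightarrow> bool \<Rightarrow> real \<Rightarrow> bool" where
  "xor_eq a b r \<longleftrightarrow> outcome_val (a \<noteq> b) = r"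

end

theory Submission
  imports Defs
begin
lemma sum_bool: "(\<Sum>x\<in>UNIV. f x) = f False + (f True :: complex)"
  by (simp add: UNIV_bool)

lemma amp_eq:
  "(\<Sum>x1\<in>UNIV. \<Sum>x2\<in>UNIV. \<Sum>x3\<in>UNIV.
          cnj (eq_ket al x1) * cnj (eq_ket be x2) * cnj (eq_ket ga x3) * B_state lam x1 x2 x3)
   = ((complex_of_real (cos (lam/2)) + cis (-ga) * complex_of_real (sin (lam/2))) + cis (-(al+be)) * (complex_of_real (sin (lam/2)) + cis (-ga) * complex_of_real (cos (lam/2)))) / 4"
proof -
  define k where "k = complex_of_real (sqrt 2)"
  have s2: "k * k = 2" unfolding k_def
    unfolding of_real_mult[symmetric] by simp
  have k0: "k \<noteq> 0" unfolding k_def by simp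
  have e: "cnj (eq_ket p x) = (if x then cis (-p) else 1) / k" for p x
    by (simp add: eq_ket_def cis_cnj k_def)
  have c: "cis (-(al+be)) = cis (-al) * cis (-be)" by (simp add: cis_mult)
  have B: "B_state lam x1 x2 x3 = ((if \<not> x1 \<and> \<not> x2 then v_lam lam x3 else 0) +
      (if x1 \<and> x2 then w_lam lam x3 else 0)) / k" for x1 x2 x3
    by (simp add: B_state_def k_def)
  have "(\<Sum>x1\<in>UNIV. \<Sum>x2\<in>UNIV. \<Sum>x3\<in>UNIV.
          cnj (eq_ket al x1) * cnj (eq_ket be x2) * cnj (eq_ket ga x3) * B_state lam x1 x2 x3)
     = ((complex_of_real (cos (lam/2)) + cis (-ga) * complex_of_real (sin (lam/2))) + cis (-al) * cis (-be) * (complex_of_real (sin (lam/2)) + cis (-ga) * complex_of_real (cos (lam/2)))) / (k*k*(k*k))"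
    unfolding sum_bool e B v_lam_def w_lam_def
    apply (simp only: if_True if_False simp_thms not_False_eq_True not_True_eq_False)
    using k0 by (simp add: field_simps)
  then show ?thesis unfolding s2 c by simp
qed
lemma cis_eq_iff: "cis x = cis y \<longleftrightarrow> (\<exists>k::int. x = y + 2 * k * pi)"
proof -
  have "cis x = cis y \<longleftrightarrow> cis (x - y) = 1"
    by (metis cis_divide cis_neq_zero right_minus_eq divide_eq_1_iff)
  also have "\<dots> \<longleftrightarrow> cos (x - y) = 1"
    using cos_one_sin_zero[of "x-y"] by (auto simp add: complex_eq_iff) 
  also have "\<dots> \<longleftrightarrow> (\<exists>k::int. x = y + 2 * k * pi)"
    unfolding cos_one_2pi_int by (auto simp: algebra_simps)
  finally show ?thesis .
qed

lemma cs_facts: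
  assumes "0 \<le> lam" "lam < pi/2"
  shows "0 \<le> sin (lam/2)" "sin (lam/2) < cos (lam/2)"
proof -
  show "0 \<le> sin (lam/2)" using assms by (auto intro!: sin_ge_zero)
  have c0: "0 < cos (lam/2)" using assms by (intro cos_gt_zero_pi) auto
  have "0 < cos lam" using assms by (intro cos_gt_zero_pi) auto
  also have "cos lam = cos (lam/2)^2 - sin (lam/2)^2"
    using cos_double[of "lam/2"] by simp
  finally have "sin (lam/2)^2 < cos (lam/2)^2" by simp
  then show "sin (lam/2) < cos (lam/2)"
    using c0 \<open>0 \<le> sin (lam/2)\<close> by (smt (verit) power_mono)
qed

lemma u_nz:
  assumes "0 \<le> lam" "lam < pi/2"
  shows "complex_of_real (sin (lam/2)) + complex_of_real (cos (lam/2)) * cis g \<noteq> 0"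
proof
  assume h: "complex_of_real (sin (lam/2)) + complex_of_real (cos (lam/2)) * cis g = 0"
  have re: "sin (lam/2) + cos (lam/2) * cos g = 0" and im: "cos (lam/2) * sin g = 0"
    using arg_cong[OF h, of Re] arg_cong[OF h, of Im] by simp_all
  have c0: "0 < cos (lam/2)" using assms by (intro cos_gt_zero_pi) auto
  with im have "sin g = 0" by simp
  then have "cos g = 1 \<or> cos g = -1" using sin_cos_squared_add[of g]
    by (metis add_0 power2_eq_1_iff power_zero_numeral)
  then show False using re cs_facts[OF assms] by auto
qed

lemma cis_beta:
  fixes g :: real
  assumes "0 \<le> lam" "lam < pi/2"
  defines "u \<equiv> complex_of_real (sin (lam/2)) + complex_of_real (cos (lam/2)) * cis g"
  shows "cis (beta lam g) * u = cis g * cnj u"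
proof (cases "sin (lam/2) + cos (lam/2) * cos g = 0")
  case True
  then have "cnj u = - u" unfolding u_def by (simp add: complex_eq_iff)
  moreover have "cis (g - pi) = - cis g" by (simp add: complex_eq_iff)
  ultimately show ?thesis using True by (simp add: beta_def)
next
  case False
  define d where "d = sin (lam/2) + cos (lam/2) * cos g"
  define t where "t = cos (lam/2) * sin g / d"
  define r where "r = sqrt (1 + t^2)"
  define w where "w = cis (arctan t)"
  have d0: "d \<noteq> 0" using False d_def by simp
  have r0: "r > 0" unfolding r_def by (simp add: add_pos_nonneg)
  have w: "w = complex_of_real (1/r) + \<i> * complex_of_real (t/r)"
    unfolding w_def r_def by (simp add: complex_eq_iff cos_arctan sin_arctan)
  have uw: "u = complex_of_real (d*r) * w"
    unfolding u_def w using d0 r0 by (simp add: complex_eq_iff d_def t_def)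
  have ww: "cnj w * w = 1" unfolding w_def by (simp add: cis_cnj cis_mult)
  have b: "cis (beta lam g) = cis g * cnj w * cnj w"
  proof -
    have "beta lam g = g + - arctan t + - arctan t"
      using d0 unfolding beta_def Let_def d_def t_def by simp
    then have "cis (beta lam g) = cis g * cis (- arctan t) * cis (- arctan t)"
      by (simp only: cis_mult)
    then show ?thesis unfolding w_def by (simp only: cis_cnj)
  qed
  show ?thesis
  proof -
    have "cis g * cnj w * cnj w * (complex_of_real (d*r) * w) = cis g * cnj w * complex_of_real (d*r) * (cnj w * w)"
      by (simp only: mult_ac)
    also have "\<dots> = cis g * cnj w * complex_of_real (d*r)"
      by (simp only: ww mult_1_right)
    also have "\<dots> = cis g * cnj (complex_of_real (d*r) * w)"
      by (simp only: complex_cnj_mult complex_cnj_complex_of_real mult_ac)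
    finally show ?thesis unfolding b uw .
  qed
qed

lemma mod2r_iff:
  assumes "e = 0 \<or> e = 1"
  shows "mod2r x = e \<longleftrightarrow> (\<exists>k::int. x = e + 2 * k)"
proof
  assume "mod2r x = e" then show "\<exists>k::int. x = e + 2 * k"
    by (intro exI[of _ "\<lfloor>x/2\<rfloor>"]) (auto simp: mod2r_def)
next
  assume "\<exists>k::int. x = e + 2 * k"
  then obtain k :: int where k: "x = e + 2 * real_of_int k" by blast
  have "\<lfloor>x/2\<rfloor> = k" using assms unfolding k by (intro floor_unique) auto
  then show "mod2r x = e" by (simp add: mod2r_def k)
qed

lemma imp_iff:
  assumes "0 \<le> lam" "lam < pi/2"
  shows "impossible (B_state lam) (A, B, C) (a, b, c) \<longleftrightarrow> xor_eq a (\<not> b) (r_coef lam A B C c)"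
proof -
  define g where "g = C + outcome_val c * pi"
  define sg where "sg = A + outcome_val a * pi + (B + outcome_val b * pi)"
  define u where "u = complex_of_real (sin (lam/2)) + complex_of_real (cos (lam/2)) * cis g"
  have unz: "u \<noteq> 0" unfolding u_def using u_nz[OF assms] .
  have cb: "cis (beta lam g) * u = cis g * cnj u" unfolding u_def using cis_beta[OF assms] .
  have t0: "complex_of_real (cos (lam/2)) + cis (-g) * complex_of_real (sin (lam/2)) = cis (-g) * u"
    unfolding u_def by (simp add: algebra_simps cis_mult)
  have t1: "complex_of_real (sin (lam/2)) + cis (-g) * complex_of_real (cos (lam/2)) = cnj u"
    unfolding u_def by (simp add: cis_cnj)
  have "impossible (B_state lam) (A, B, C) (a, b, c) \<longleftrightarrow> cis (-g) * u + cis (-sg) * cnj u = 0"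
  proof -
    have "impossible (B_state lam) (A, B, C) (a, b, c) \<longleftrightarrow>
      ((complex_of_real (cos (lam/2)) + cis (-g) * complex_of_real (sin (lam/2))) + cis (-sg) * (complex_of_real (sin (lam/2)) + cis (-g) * complex_of_real (cos (lam/2)))) / 4 = 0"
      unfolding impossible_def g_def sg_def prod.case amp_eq ..
    then show ?thesis unfolding t0 t1 by simp
  qed
  also have "\<dots> \<longleftrightarrow> cis sg * u + cis g * cnj u = 0"
  proof -
    have "cis sg * cis g * (cis (-g) * u + cis (-sg) * cnj u) = cis sg * u + cis g * cnj u"
      by (simp add: algebra_simps cis_mult)
    moreover have "cis sg * cis g \<noteq> 0" by simp
    ultimately show ?thesis by (metis mult_eq_0_iff)
  qed
  also have "\<dots> \<longleftrightarrow> cis sg * u = - (cis (beta lam g) * u)"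
    unfolding cb[symmetric] by (rule eq_neg_iff_add_eq_0[symmetric])
  also have "\<dots> \<longleftrightarrow> cis sg = - cis (beta lam g)"
    using unz by (metis minus_mult_left mult_cancel_right)
  also have "\<dots> \<longleftrightarrow> cis sg = cis (beta lam g + pi)"
    by (simp add: complex_eq_iff)
  also have "\<dots> \<longleftrightarrow> (\<exists>k::int. sg = beta lam g + pi + 2 * k * pi)"
    by (rule cis_eq_iff)
  also have "\<dots> \<longleftrightarrow> (\<exists>k::int. (A + B - beta lam g) / pi = outcome_val (a \<noteq> (\<not> b)) + 2 * real_of_int k)"
  proof -
    define dd :: int where "dd = (if a \<and> b then -1 else 0)"
    have H: "sg = beta lam g + pi + 2 * real_of_int k * pi \<longleftrightarrow>
          (A + B - beta lam g) / pi = outcome_val (a \<noteq> (\<not> b)) + 2 * real_of_int (k + dd)" for k :: int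
      unfolding sg_def outcome_val_def dd_def using pi_gt_zero
      by (auto simp: field_simps)
    show ?thesis
    proof
      assume "\<exists>k::int. sg = beta lam g + pi + 2 * real_of_int k * pi"
      then obtain k :: int where "sg = beta lam g + pi + 2 * real_of_int k * pi" by blast
      then have "(A + B - beta lam g) / pi = outcome_val (a \<noteq> (\<not> b)) + 2 * real_of_int (k + dd)"
        using H by blast
      then show "\<exists>k::int. (A + B - beta lam g) / pi = outcome_val (a \<noteq> (\<not> b)) + 2 * real_of_int k" by blast
    next
      assume "\<exists>k::int. (A + B - beta lam g) / pi = outcome_val (a \<noteq> (\<not> b)) + 2 * real_of_int k"
      then obtain k :: int where "(A + B - beta lam g) / pi = outcome_val (a \<noteq> (\<not> b)) + 2 * real_of_int k" by blast
      then have "(A + B - beta lam g) / pi = outcome_val (a \<noteq> (\<not> b)) + 2 * real_of_int ((k - dd) + dd)"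
        by simp
      then have "sg = beta lam g + pi + 2 * real_of_int (k - dd) * pi" using H by blast
      then show "\<exists>k::int. sg = beta lam g + pi + 2 * real_of_int k * pi" by blast
    qed
  qed
  also have "\<dots> \<longleftrightarrow> mod2r ((A + B - beta lam g) / pi) = outcome_val (a \<noteq> (\<not> b))"
    by (rule mod2r_iff[symmetric]) (simp add: outcome_val_def)
  finally show ?thesis
    unfolding xor_eq_def r_coef_def g_def by auto
qed

lemma guard2: "(r \<in> {0, 1} \<and> \<not> xor_eq a b r) \<longleftrightarrow> xor_eq a (\<not> b) r"
  by (auto simp: xor_eq_def outcome_val_def)

lemma guard_iff: "(\<not> (r \<in> {0, 1} \<longrightarrow> xor_eq a b r)) \<longleftrightarrow> xor_eq a (\<not> b) r"
  by (auto simp: xor_eq_def outcome_val_def)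

theorem lemma9:
  fixes lam :: real and M1 M2 :: "real set" and C :: "nat \<Rightarrow> real" and n :: nat
  assumes "0 \<le> lam" and "lam < pi / 2"
    and "measurement_scenario M1 M2 (C ` {..<n})"
    and "inj_on C {..<n}"
  shows "paradox (B_state lam) M1 M2 (C ` {..<n}) \<longleftrightarrow>
    (\<forall>z :: nat \<Rightarrow> bool.
       \<not> (\<exists>a b :: real \<Rightarrow> bool.
            \<forall>l<n. \<forall>A\<in>M1. \<forall>B\<in>M2.
              r_coef lam A B (C l) (z l) \<in> {0, 1} \<longrightarrow>
              xor_eq (a A) (b B) (r_coef lam A B (C l) (z l))))"
proof -
  have P: "paradox (B_state lam) M1 M2 (C ` {..<n}) \<longleftrightarrow>
     (\<forall>g1 g2 g3 :: real \<Rightarrow> bool. \<exists>l<n. \<exists>A\<in>M1. \<exists>B\<in>M2.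
        xor_eq (g1 A) (\<not> g2 B) (r_coef lam A B (C l) (g3 (C l))))"
  proof -
    have ex_img: "(\<exists>x\<in>C`{..<n}. Q x) \<longleftrightarrow> (\<exists>l<n. Q (C l))" for Q by auto
    have sw: "(\<exists>A\<in>M1. \<exists>B\<in>M2. \<exists>l<n. Q A B l) \<longleftrightarrow> (\<exists>l<n. \<exists>A\<in>M1. \<exists>B\<in>M2. Q A B l)" for Q by auto
    show ?thesis unfolding paradox_def imp_iff[OF assms(1,2)] ex_img sw ..
  qed
  have R: "(\<forall>z :: nat \<Rightarrow> bool.
       \<not> (\<exists>a b :: real \<Rightarrow> bool.
            \<forall>l<n. \<forall>A\<in>M1. \<forall>B\<in>M2.
              r_coef lam A B (C l) (z l) \<in> {0, 1} \<longrightarrow>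
              xor_eq (a A) (b B) (r_coef lam A B (C l) (z l)))) \<longleftrightarrow>
     (\<forall>z :: nat \<Rightarrow> bool. \<forall>a b :: real \<Rightarrow> bool. \<exists>l<n. \<exists>A\<in>M1. \<exists>B\<in>M2.
        xor_eq (a A) (\<not> b B) (r_coef lam A B (C l) (z l)))"
    by (simp only: guard_iff not_ex not_all not_imp Ball_def Bex_def ex_simps all_simps guard2 conj_assoc)
  show ?thesis
    unfolding P R
  proof (intro iffI allI)
    fix z :: "nat \<Rightarrow> bool" and a b :: "real \<Rightarrow> bool"
    assume H: "\<forall>g1 g2 g3 :: real \<Rightarrow> bool. \<exists>l<n. \<exists>A\<in>M1. \<exists>B\<in>M2.
        xor_eq (g1 A) (\<not> g2 B) (r_coef lam A B (C l) (g3 (C l)))"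
    define g3 where "g3 = (\<lambda>x. z (inv_into {..<n} C x))"
    have gz: "g3 (C l) = z l" if "l < n" for l
      unfolding g3_def using assms(4) that by (simp add: inv_into_f_f)
    obtain l A B where "l < n" "A \<in> M1" "B \<in> M2"
      "xor_eq (a A) (\<not> b B) (r_coef lam A B (C l) (g3 (C l)))"
      using spec[OF spec[OF spec[OF H, of a], of b], of g3] by blast
    then show "\<exists>l<n. \<exists>A\<in>M1. \<exists>B\<in>M2. xor_eq (a A) (\<not> b B) (r_coef lam A B (C l) (z l))"
      using gz by auto
  next
    fix g1 g2 g3 :: "real \<Rightarrow> bool"
    assume H: "\<forall>z :: nat \<Rightarrow> bool. \<forall>a b :: real \<Rightarrow> bool. \<exists>l<n. \<exists>A\<in>M1. \<exists>B\<in>M2.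
        xor_eq (a A) (\<not> b B) (r_coef lam A B (C l) (z l))"
    show "\<exists>l<n. \<exists>A\<in>M1. \<exists>B\<in>M2. xor_eq (g1 A) (\<not> g2 B) (r_coef lam A B (C l) (g3 (C l)))"
      using spec[OF spec[OF spec[OF H, of "\<lambda>l. g3 (C l)"], of g1], of g2] by simp
  qed
qed

end
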